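(* Let $n \ge 1$ and let $a_1,\dots,a_n > 0$. Let $\Lambda_o \subset \mathbb{R}^n$ be the orthogonal lattice generated by $a_1\mathbf{e}_1,\dots,a_n\mathbf{e}_n$ (where $\mathbf{e}_i$ are the standard basis vectors). Let $\Lambda_s \neq \Lambda_o$ be a lattice in $\mathbb{R}^n$ having a generator matrix that is an upper triangular $n\times n$ real matrix with diagonal entries $a_1,\dots,a_n$ (a "skewing" of $\Lambda_o$). Then for all $x>0$, $$\sum_{\mathbf{t}\in\Lambda_s} e^{-x\|\mathbf{t}\|^2} < \sum_{\mathbf{t}\in\Lambda_o} e^{-x\|\mathbf{t}\|^2}.$$
   Context: A lattice $\Lambda\subset\mathbb{R}^n$ generated by a matrix $M\in\mathbb{R}^{n\times n}$ with linearly independent columns is $\{M\omega : \omega\in\mathbb{Z}^n\}$. $\|\cdot\|$ is the Euclidean norm. *)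

theory Defs
  imports "HOL-Analysis.Analysis"
begin

text \<open>Lattice generated by the columns of M: the set of all M w with w an integer vector.
  Entry M $ i $ j is row i, column j.\<close>
definition lattice_gen :: "real^'n^'n \<Rightarrow> (real^'n) set" where
  "lattice_gen M = {M *v w | w. \<forall>i. w $ i \<in> \<int>}"

definition diag_mat :: "real^'n \<Rightarrow> real^'n^'n" where
  "diag_mat a = (\<chi> i j. if i = j then a $ i else 0)"

class finite_linorder = finite + linorder

instance num1 :: finite_linorder ..
instance bit0 :: (finite) finite_linorder ..
instance bit1 :: (finite) finite_linorder ..

end

theory Submission
  imports Defs
begin


lemma summable_geo_int:
  fixes \<alpha> :: real assumes "\<alpha> > 0"
  shows "(\<lambda>k::int. exp (- \<alpha> * \<bar>real_of_int k\<bar>)) summable_on UNIV"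
proof -
  have geo: "summable (\<lambda>n::nat. exp (- \<alpha>) ^ n)"
    by (rule summable_geometric) (use assms in simp)
  have e: "exp (- (\<alpha> * real n)) = exp (- \<alpha>) ^ n" for n :: nat
    by (simp add: exp_of_nat_mult[symmetric] mult.commute)
  have s1': "(\<lambda>n::nat. exp (- \<alpha>) ^ n) summable_on UNIV"
    using geo by (subst summable_on_UNIV_nonneg_real_iff) auto
  have s1: "(\<lambda>n::nat. exp (- \<alpha> * real n)) summable_on UNIV"
    using s1' by (rule summable_on_cong[THEN iffD1, rotated]) (simp add: e[symmetric])
  have s2: "(\<lambda>n::nat. exp (- \<alpha> * real (Suc n))) summable_on UNIV"
  proof -
    have "summable (\<lambda>n::nat. exp (- \<alpha>) ^ Suc n)" using geo summable_Suc_iff by blast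
    then have "(\<lambda>n::nat. exp (- \<alpha>) ^ Suc n) summable_on UNIV"
      by (subst summable_on_UNIV_nonneg_real_iff) auto
    then show ?thesis by (rule summable_on_cong[THEN iffD1, rotated]) (simp add: e[symmetric] del: power_Suc)
  qed
  have A: "(\<lambda>k::int. exp (- \<alpha> * \<bar>real_of_int k\<bar>)) summable_on (int ` UNIV)"
    by (subst summable_on_reindex) (use s1 in \<open>auto simp: o_def\<close>)
  have B: "(\<lambda>k::int. exp (- \<alpha> * \<bar>real_of_int k\<bar>)) summable_on ((\<lambda>n. - int (Suc n)) ` UNIV)"
  proof (subst summable_on_reindex)
    show "inj_on (\<lambda>n. - int (Suc n)) UNIV" by (auto simp: inj_on_def)
    show "((\<lambda>k::int. exp (- \<alpha> * \<bar>real_of_int k\<bar>)) \<circ> (\<lambda>n. - int (Suc n))) summable_on UNIV"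
      using s2 by (rule summable_on_cong[THEN iffD1, rotated]) (simp add: o_def)
  qed
  have U: "UNIV = int ` UNIV \<union> (\<lambda>n. - int (Suc n)) ` UNIV"
  proof (rule set_eqI)
    fix k :: int show "k \<in> UNIV \<longleftrightarrow> k \<in> int ` UNIV \<union> (\<lambda>n. - int (Suc n)) ` UNIV"
    proof (cases "k \<ge> 0")
      case True then show ?thesis by (auto intro: image_eqI[of _ _ "nat k"])
    next
      case False then show ?thesis by (auto intro!: image_eqI[of _ _ "nat (- k - 1)"])
    qed
  qed
  show ?thesis
    by (subst U, rule summable_on_Un_disjoint[OF A B]) auto
qed

definition th :: "real \<Rightarrow> real \<Rightarrow> real" where
  "th s c = (\<Sum>\<^sub>\<infinity>k::int. exp (- s * (real_of_int k + c)\<^sup>2))"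

lemma th_summable:
  assumes "s > 0"
  shows "(\<lambda>k::int. exp (- s * (real_of_int k + c)\<^sup>2)) summable_on UNIV"
proof -
  have "(\<lambda>k::int. exp (s * c\<^sup>2) * exp (- (s/2) * \<bar>real_of_int k\<bar>)) summable_on UNIV"
    by (rule summable_on_cmult_right, rule summable_geo_int) (use assms in simp)
  moreover have "exp (- s * (real_of_int k + c)\<^sup>2) \<le> exp (s * c\<^sup>2) * exp (- (s/2) * \<bar>real_of_int k\<bar>)" for k
  proof -
    have k2: "\<bar>real_of_int k\<bar> \<le> (real_of_int k)\<^sup>2"
    proof (cases "k = 0")
      case False then have "1 \<le> \<bar>real_of_int k\<bar>" by linarith
      then have "\<bar>real_of_int k\<bar> * 1 \<le> \<bar>real_of_int k\<bar> * \<bar>real_of_int k\<bar>" by (intro mult_left_mono) auto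
      then show ?thesis by (simp add: power2_eq_square)
    qed simp
    have "2 * (real_of_int k + c)\<^sup>2 + 2 * c\<^sup>2 - (real_of_int k)\<^sup>2 = (real_of_int k + 2 * c)\<^sup>2"
      by (simp add: power2_eq_square algebra_simps)
    then have "\<bar>real_of_int k\<bar> \<le> 2 * (real_of_int k + c)\<^sup>2 + 2 * c\<^sup>2"
      using k2 zero_le_power2[of "real_of_int k + 2 * c"] by linarith
    then have "(s/2) * \<bar>real_of_int k\<bar> \<le> (s/2) * (2 * (real_of_int k + c)\<^sup>2 + 2 * c\<^sup>2)"
      using assms by (intro mult_left_mono) auto
    then have "- s * (real_of_int k + c)\<^sup>2 \<le> s * c\<^sup>2 + (- (s/2) * \<bar>real_of_int k\<bar>)"
      by (simp add: algebra_simps)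
    then show ?thesis by (simp add: exp_add[symmetric])
  qed
  ultimately show ?thesis
    by (rule summable_on_comparison_test) auto
qed


lemma th_has_sum: "s > 0 \<Longrightarrow> ((\<lambda>k::int. exp (- s * (real_of_int k + c)\<^sup>2)) has_sum th s c) UNIV"
  unfolding th_def by (rule has_sum_infsum, rule th_summable)

lemma has_sum_product_nonneg:
  fixes f g :: "_ \<Rightarrow> real"
  assumes f: "(f has_sum a) A" and g: "(g has_sum b) B"
    and f0: "\<And>x. f x \<ge> 0" and g0: "\<And>y. g y \<ge> 0"
  shows "((\<lambda>(x,y). f x * g y) has_sum (a * b)) (A \<times> B)"
proof -
  have fib: "((\<lambda>y. (\<lambda>(x,y). f x * g y) (x, y)) has_sum (f x * b)) B" for x
    using has_sum_cmult_right[OF g, of "f x"] by simp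
  have out: "((\<lambda>x. f x * b) has_sum (a * b)) A"
    by (rule has_sum_cmult_left[OF f])
  have sm: "(\<lambda>(x,y). f x * g y) summable_on Sigma A (\<lambda>_. B)"
    by (rule summable_on_SigmaI[OF fib]) (use out f0 g0 in \<open>auto intro: has_sum_imp_summable\<close>)
  show ?thesis
    using has_sum_SigmaI[OF fib out sm] by simp
qed

lemma th_dup:
  assumes "s > 0"
  shows "th s u * th s v = th (2 * s) ((u+v)/2) * th (2 * s) ((u-v)/2)
          + th (2 * s) ((u+v+1)/2) * th (2 * s) ((u-v+1)/2)"
proof -
  define F where "F = (\<lambda>(k::int, l::int). exp (- s * (real_of_int k + u)\<^sup>2) * exp (- s * (real_of_int l + v)\<^sup>2))"
  have L: "(F has_sum (th s u * th s v)) (UNIV \<times> UNIV)"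
    unfolding F_def by (rule has_sum_product_nonneg[OF th_has_sum th_has_sum]) (use assms in auto)
  define E where "E = (\<lambda>(i::int, j::int). (i + j, i - j))"
  define Od where "Od = (\<lambda>(i::int, j::int). (i + j + 1, i - j))"
  have injE: "inj_on E UNIV" unfolding E_def inj_on_def by auto
  have injOd: "inj_on Od UNIV" unfolding Od_def inj_on_def by auto
  have 2: "2 * s > 0" using assms by simp
  have HE: "((F \<circ> E) has_sum (th (2 * s) ((u+v)/2) * th (2 * s) ((u-v)/2))) (UNIV \<times> UNIV)"
  proof -
    have "((\<lambda>(i,j). exp (- (2 * s) * (real_of_int i + (u+v)/2)\<^sup>2) * exp (- (2 * s) * (real_of_int j + (u-v)/2)\<^sup>2))
          has_sum (th (2 * s) ((u+v)/2) * th (2 * s) ((u-v)/2))) (UNIV \<times> UNIV)"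
      by (rule has_sum_product_nonneg[OF th_has_sum[OF 2] th_has_sum[OF 2]]) auto
    moreover have "(F \<circ> E) = (\<lambda>(i,j). exp (- (2 * s) * (real_of_int i + (u+v)/2)\<^sup>2) * exp (- (2 * s) * (real_of_int j + (u-v)/2)\<^sup>2))"
    proof (rule ext, clarify)
      fix i j :: int
      have "- s * (real_of_int (i+j) + u)\<^sup>2 + - s * (real_of_int (i-j) + v)\<^sup>2
          = - (2 * s) * (real_of_int i + (u+v)/2)\<^sup>2 + - (2 * s) * (real_of_int j + (u-v)/2)\<^sup>2"
        by (simp add: power2_eq_square field_simps)
      then show "(F \<circ> E) (i, j) = exp (- (2 * s) * (real_of_int i + (u+v)/2)\<^sup>2) * exp (- (2 * s) * (real_of_int j + (u-v)/2)\<^sup>2)"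
        by (simp add: F_def E_def exp_add[symmetric])
    qed
    ultimately show ?thesis by simp
  qed
  have HOd: "((F \<circ> Od) has_sum (th (2 * s) ((u+v+1)/2) * th (2 * s) ((u-v+1)/2))) (UNIV \<times> UNIV)"
  proof -
    have "((\<lambda>(i,j). exp (- (2 * s) * (real_of_int i + (u+v+1)/2)\<^sup>2) * exp (- (2 * s) * (real_of_int j + (u-v+1)/2)\<^sup>2))
          has_sum (th (2 * s) ((u+v+1)/2) * th (2 * s) ((u-v+1)/2))) (UNIV \<times> UNIV)"
      by (rule has_sum_product_nonneg[OF th_has_sum[OF 2] th_has_sum[OF 2]]) auto
    moreover have "(F \<circ> Od) = (\<lambda>(i,j). exp (- (2 * s) * (real_of_int i + (u+v+1)/2)\<^sup>2) * exp (- (2 * s) * (real_of_int j + (u-v+1)/2)\<^sup>2))"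
    proof (rule ext, clarify)
      fix i j :: int
      have "- s * (real_of_int (i+j+1) + u)\<^sup>2 + - s * (real_of_int (i-j) + v)\<^sup>2
          = - (2 * s) * (real_of_int i + (u+v+1)/2)\<^sup>2 + - (2 * s) * (real_of_int j + (u-v+1)/2)\<^sup>2"
        by (simp add: power2_eq_square field_simps)
      then show "(F \<circ> Od) (i, j) = exp (- (2 * s) * (real_of_int i + (u+v+1)/2)\<^sup>2) * exp (- (2 * s) * (real_of_int j + (u-v+1)/2)\<^sup>2)"
        by (simp add: F_def Od_def exp_add[symmetric])
    qed
    ultimately show ?thesis by simp
  qed
  have HE': "(F has_sum (th (2 * s) ((u+v)/2) * th (2 * s) ((u-v)/2))) (E ` UNIV)"
    using HE by (subst has_sum_reindex[OF injE]) simp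
  have HOd': "(F has_sum (th (2 * s) ((u+v+1)/2) * th (2 * s) ((u-v+1)/2))) (Od ` UNIV)"
    using HOd by (subst has_sum_reindex[OF injOd]) simp
  have disj: "E ` UNIV \<inter> Od ` UNIV = {}"
    unfolding E_def Od_def by auto presburger
  have cover: "E ` UNIV \<union> Od ` UNIV = UNIV"
  proof (rule set_eqI)
    fix p :: "int \<times> int"
    obtain k l where p: "p = (k, l)" by (cases p)
    show "p \<in> E ` UNIV \<union> Od ` UNIV \<longleftrightarrow> p \<in> UNIV"
    proof (cases "even (k + l)")
      case True
      then obtain m where m: "k + l = 2 * m" using True evenE by blast
      have "p = E (m, k - m)" unfolding E_def p using m by auto
      then show ?thesis by auto
    next
      case False
      then obtain m where m: "k + l = 2 * m + 1" using False oddE by blast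
      have "p = Od (m, k - m - 1)" unfolding Od_def p using m by auto
      then show ?thesis by auto
    qed
  qed
  have "(F has_sum (th (2 * s) ((u+v)/2) * th (2 * s) ((u-v)/2) + th (2 * s) ((u+v+1)/2) * th (2 * s) ((u-v+1)/2))) UNIV"
    using has_sum_Un_disjoint[OF HE' HOd' disj] cover by simp
  moreover have "(F has_sum (th s u * th s v)) UNIV" using L by simp
  ultimately show ?thesis using has_sum_unique by blast
qed


lemma th_ge_term: "s > 0 \<Longrightarrow> exp (- s * (real_of_int k + c)\<^sup>2) \<le> th s c"
  using finite_sum_le_has_sum[OF th_has_sum[of s c], of "{k}"] by auto

lemma th_pos: "s > 0 \<Longrightarrow> th s c > 0"
  using th_ge_term[of s 0 c] by (meson exp_gt_zero less_le_trans)

lemma th0_ge1: "s > 0 \<Longrightarrow> th s 0 \<ge> 1"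
  using th_ge_term[of s 0 0] by simp

lemma th_shift: assumes "s > 0" shows "th s (c + real_of_int m) = th s c"
proof -
  have inj: "inj_on (\<lambda>k::int. k + m) UNIV" by (auto simp: inj_on_def)
  have "((\<lambda>k::int. exp (- s * (real_of_int k + c)\<^sup>2)) has_sum th s c) ((\<lambda>k. k + m) ` UNIV)"
  proof -
    have "(\<lambda>k::int. k + m) ` UNIV = UNIV" by (auto intro: image_eqI[of _ _ "_ - m"])
    then show ?thesis using th_has_sum[OF assms] by simp
  qed
  then have "(((\<lambda>k::int. exp (- s * (real_of_int k + c)\<^sup>2)) \<circ> (\<lambda>k. k + m)) has_sum th s c) UNIV"
    by (subst (asm) has_sum_reindex[OF inj])
  then have "((\<lambda>k::int. exp (- s * (real_of_int k + (c + real_of_int m))\<^sup>2)) has_sum th s c) UNIV"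
    by (simp add: o_def add_ac)
  then show ?thesis using th_has_sum[OF assms] has_sum_unique by blast
qed

lemma th_even: assumes "s > 0" shows "th s (- c) = th s c"
proof -
  have inj: "inj_on (\<lambda>k::int. - k) UNIV" by (auto simp: inj_on_def)
  have "((\<lambda>k::int. exp (- s * (real_of_int k + c)\<^sup>2)) has_sum th s c) ((\<lambda>k. - k) ` UNIV)"
  proof -
    have "(\<lambda>k::int. - k) ` UNIV = UNIV" by (auto intro: image_eqI[of _ _ "- _"])
    then show ?thesis using th_has_sum[OF assms] by simp
  qed
  then have "(((\<lambda>k::int. exp (- s * (real_of_int k + c)\<^sup>2)) \<circ> (\<lambda>k. - k)) has_sum th s c) UNIV"
    by (subst (asm) has_sum_reindex[OF inj])
  moreover have "((\<lambda>k::int. exp (- s * (real_of_int k + c)\<^sup>2)) \<circ> (\<lambda>k. - k))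
      = (\<lambda>k::int. exp (- s * (real_of_int k + (- c))\<^sup>2))"
    by (rule ext) (simp add: power2_eq_square algebra_simps)
  ultimately show ?thesis using th_has_sum[OF assms] has_sum_unique by metis
qed

lemma th_bound01:
  assumes "s > 0" "0 \<le> c" "c < 1"
  shows "th s c \<le> 2 * th s 0"
proof -
  have g: "((\<lambda>k::int. exp (- s * (real_of_int k + 0)\<^sup>2) + exp (- s * (real_of_int k + 1)\<^sup>2)) has_sum (th s 0 + th s 1)) UNIV"
    by (intro has_sum_add th_has_sum assms)
  have "th s 1 = th s 0" using th_shift[OF assms(1), of 0 1] by simp
  moreover have "th s c \<le> th s 0 + th s 1"
  proof (rule has_sum_mono[OF th_has_sum[OF assms(1)] g])
    fix k :: int
    show "exp (- s * (real_of_int k + c)\<^sup>2) \<le> exp (- s * (real_of_int k + 0)\<^sup>2) + exp (- s * (real_of_int k + 1)\<^sup>2)"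
    proof (cases "k \<ge> 0")
      case True
      then have "(real_of_int k)\<^sup>2 \<le> (real_of_int k + c)\<^sup>2" using assms by (intro power_mono) auto
      then have "exp (- s * (real_of_int k + c)\<^sup>2) \<le> exp (- s * (real_of_int k + 0)\<^sup>2)"
        using assms by simp
      then show ?thesis by (rule add_increasing2[OF exp_ge_zero])
    next
      case False
      then have "k \<le> -1" by simp
      then have "(- (real_of_int k + 1))\<^sup>2 \<le> (- (real_of_int k + c))\<^sup>2" using assms by (intro power_mono) auto
      then have "(real_of_int k + 1)\<^sup>2 \<le> (real_of_int k + c)\<^sup>2"
        by (metis power2_minus)
      then have "exp (- s * (real_of_int k + c)\<^sup>2) \<le> exp (- s * (real_of_int k + 1)\<^sup>2)"
        using assms by simp
      then show ?thesis by (rule add_increasing[OF exp_ge_zero])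
    qed
  qed
  ultimately show ?thesis by simp
qed

lemma th_bound:
  assumes "s > 0" shows "th s c \<le> 2 * th s 0"
proof -
  have "th s c = th s (c - real_of_int \<lfloor>c\<rfloor>)"
    using th_shift[OF assms, of "c - real_of_int \<lfloor>c\<rfloor>" "\<lfloor>c\<rfloor>"] by simp
  also have "\<dots> \<le> 2 * th s 0"
    by (rule th_bound01[OF assms]) linarith+
  finally show ?thesis .
qed




lemma th_d1: assumes "s > 0"
  shows "th s c * th s c = th (2 * s) c * th (2 * s) 0 + th (2 * s) (c + 1/2) * th (2 * s) (1/2)"
proof -
  have e: "(c+c)/2 = c" "(c-c)/2 = 0" "(c+c+1)/2 = c + 1/2" "(c-c+1)/2 = 1/2" by simp_all
  show ?thesis using th_dup[OF assms, of c c] by (simp only: e)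
qed

lemma th_d2: assumes "s > 0"
  shows "th s (2 * c) * th s 0 = th (2 * s) c * th (2 * s) c + th (2 * s) (c + 1/2) * th (2 * s) (c + 1/2)"
proof -
  have e: "(2 * c + 0)/2 = c" "(2 * c - 0)/2 = c" "(2 * c + 0 + 1)/2 = c + 1/2" "(2 * c - 0 + 1)/2 = c + 1/2" by simp_all
  show ?thesis using th_dup[OF assms, of "2 * c" 0] by (simp only: e)
qed

lemma th_d3: assumes "s > 0"
  shows "th s 0 * th s 0 = th (2 * s) 0 * th (2 * s) 0 + th (2 * s) (1/2) * th (2 * s) (1/2)"
  using th_d1[OF assms, of 0] by simp

lemma th_key: assumes "s > 0"
  shows "th s c ^ 4 \<le> th s 0 ^ 3 * th s (2 * c)"
proof -
  define A where "A = th (2 * s) 0"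
  define B where "B = th (2 * s) (1/2)"
  define X where "X = th (2 * s) c"
  define Y where "Y = th (2 * s) (c + 1/2)"
  have d1: "th s c * th s c = X * A + Y * B" using th_d1[OF assms, of c] by (simp add: A_def B_def X_def Y_def)
  have d2: "th s (2 * c) * th s 0 = X * X + Y * Y" using th_d2[OF assms, of c] by (simp add: X_def Y_def)
  have d3: "th s 0 * th s 0 = A * A + B * B" using th_d3[OF assms] by (simp add: A_def B_def)
  have cs: "(X * A + Y * B)^2 \<le> (A * A + B * B) * (X * X + Y * Y)"
  proof -
    have "(A * A + B * B) * (X * X + Y * Y) - (X * A + Y * B)^2 = (X * B - Y * A)^2"
      by (simp add: power2_eq_square algebra_simps)
    then show ?thesis using zero_le_power2[of "X * B - Y * A"] by linarith
  qed
  have "th s c ^ 4 = (th s c * th s c)^2" by (simp add: power2_eq_square power4_eq_xxxx)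
  also have "\<dots> = (X * A + Y * B)^2" by (simp only: d1)
  also have "\<dots> \<le> (A * A + B * B) * (X * X + Y * Y)" by (rule cs)
  also have "\<dots> = (th s 0 * th s 0) * (th s (2 * c) * th s 0)" by (simp only: d2 d3)
  also have "\<dots> = th s 0 ^ 3 * th s (2 * c)" by (simp add: power3_eq_cube)
  finally show ?thesis .
qed

lemma th_max: assumes "s > 0" shows "th s c \<le> th s 0"
proof -
  define T where "T = th s 0"
  define M where "M = Sup (range (th s))"
  have T0: "T > 0" using th_pos[OF assms] by (simp add: T_def)
  have bdd: "bdd_above (range (th s))"
    using th_bound[OF assms] by (intro bdd_aboveI[of _ "2 * th s 0"]) blast
  have upper: "th s c' \<le> M" for c' unfolding M_def using bdd by (rule cSup_upper[OF rangeI])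
  have M0: "M > 0" using upper[of 0] T0 unfolding T_def by linarith
  have "th s c' \<le> root 4 (T ^ 3 * M)" for c'
  proof -
    have "th s c' ^ 4 \<le> T ^ 3 * M"
      using order_trans[OF th_key[OF assms, of c'] mult_left_mono[OF upper[of "2 * c'"]]] T0
      unfolding T_def by simp
    then have "root 4 (th s c' ^ 4) \<le> root 4 (T ^ 3 * M)" by (rule real_root_le_mono[rotated]) simp
    moreover have "root 4 (th s c' ^ 4) = th s c'"
      using th_pos[OF assms, of c'] by (intro real_root_power_cancel) auto
    ultimately show ?thesis by simp
  qed
  then have c1: "M \<le> root 4 (T ^ 3 * M)" unfolding M_def by (intro cSup_least) blast+
  have c2: "M ^ 4 \<le> root 4 (T ^ 3 * M) ^ 4" using M0 power_mono[OF c1, of 4] by linarith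
  have c2': "root 4 (T ^ 3 * M) ^ 4 = T ^ 3 * M" using T0 M0 by (intro real_root_pow_pos2) auto
  have e4: "M ^ 4 = M ^ 3 * M" by (simp add: power4_eq_xxxx power3_eq_cube)
  have "M ^ 3 * M \<le> T ^ 3 * M" using c2 c2' e4 by linarith
  then have c3: "M ^ Suc 2 \<le> T ^ Suc 2" using M0 mult_le_cancel_right_pos[OF M0] by (simp add: numeral_3_eq_3)
  have "M \<le> T" by (rule power_le_imp_le_base[OF c3]) (use T0 in linarith)
  then show ?thesis using upper[of c] unfolding T_def by linarith
qed

lemma th_eq_prop: assumes "s > 0" and eq: "th s c = th s 0"
  shows "th (2 * s) c = th (2 * s) 0"
proof -
  define A where "A = th (2 * s) 0"
  define B where "B = th (2 * s) (1/2)"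
  define X where "X = th (2 * s) c"
  define Y where "Y = th (2 * s) (c + 1/2)"
  have d1: "th s c * th s c = X * A + Y * B" using th_d1[OF assms(1), of c] by (simp add: A_def B_def X_def Y_def)
  have d2: "th s (2 * c) * th s 0 = X * X + Y * Y" using th_d2[OF assms(1), of c] by (simp add: X_def Y_def)
  have d3: "th s 0 * th s 0 = A * A + B * B" using th_d3[OF assms(1)] by (simp add: A_def B_def)
  have "th s (2 * c) * th s 0 \<le> th s 0 * th s 0"
    using th_max[OF assms(1), of "2 * c"] th_pos[OF assms(1), of 0] by (intro mult_right_mono) auto
  then have "X * X + Y * Y \<le> A * A + B * B" using d2 d3 by simp
  moreover have "X * A + Y * B = A * A + B * B" using d1 d3 eq by simp
  ultimately have "(X - A)^2 + (Y - B)^2 \<le> 0" by (simp add: power2_eq_square algebra_simps)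
  then have "X = A" by (simp add: sum_power2_le_zero_iff)
  then show ?thesis by (simp add: X_def A_def)
qed


lemma th_decay:
  assumes s: "s > 0" and ts: "s \<le> t" and d: "\<And>k::int. d \<le> (real_of_int k + c)\<^sup>2"
  shows "th t c \<le> exp (- (t - s) * d) * th s c"
proof (rule has_sum_mono[OF th_has_sum has_sum_cmult_right[OF th_has_sum[OF s]]])
  show "t > 0" using s ts by linarith
  fix k :: int
  have "- t * (real_of_int k + c)\<^sup>2 = - (t - s) * (real_of_int k + c)\<^sup>2 + - s * (real_of_int k + c)\<^sup>2"
    by (simp add: algebra_simps)
  moreover have "- (t - s) * (real_of_int k + c)\<^sup>2 \<le> - (t - s) * d"
    using d[of k] ts by (intro mult_left_mono_neg) auto
  ultimately have "- t * (real_of_int k + c)\<^sup>2 \<le> - (t - s) * d + - s * (real_of_int k + c)\<^sup>2" by linarith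
  then have "exp (- t * (real_of_int k + c)\<^sup>2) \<le> exp (- (t - s) * d + - s * (real_of_int k + c)\<^sup>2)" by simp
  then show "exp (- t * (real_of_int k + c)\<^sup>2) \<le> exp (- (t - s) * d) * exp (- s * (real_of_int k + c)\<^sup>2)"
    by (simp only: exp_add[symmetric])
qed

lemma th_strict:
  assumes s: "s > 0" and c: "c \<notin> \<int>"
  shows "th s c < th s 0"
proof (rule ccontr)
  assume "\<not> th s c < th s 0"
  then have eq: "th s c = th s 0" using th_max[OF s, of c] by linarith
  define f where "f = c - real_of_int \<lfloor>c\<rfloor>"
  have "real_of_int \<lfloor>c\<rfloor> \<noteq> c" using c by (metis Ints_of_int)
  then have f0: "0 < f" "f < 1" unfolding f_def by linarith+
  define d where "d = min (f\<^sup>2) ((1 - f)\<^sup>2)"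
  have d0: "d > 0" unfolding d_def using f0 by simp
  have dk: "d \<le> (real_of_int k + c)\<^sup>2" for k :: int
  proof -
    define m where "m = k + \<lfloor>c\<rfloor>"
    have km: "real_of_int k + c = real_of_int m + f" unfolding m_def f_def by simp
    show ?thesis
    proof (cases "m \<ge> 0")
      case True
      then have "f\<^sup>2 \<le> (real_of_int m + f)\<^sup>2" using f0 by (intro power_mono) auto
      then show ?thesis unfolding km d_def by linarith
    next
      case False
      then have "m \<le> -1" by simp
      then have "(1 - f)\<^sup>2 \<le> (- (real_of_int m + f))\<^sup>2" using f0 by (intro power_mono) auto
      then have "(1 - f)\<^sup>2 \<le> (real_of_int m + f)\<^sup>2" by (metis power2_minus)
      then show ?thesis unfolding km d_def by linarith
    qed
  qed
  have eqn: "th (2 ^ n * s) c = th (2 ^ n * s) 0" for n :: nat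
  proof (induction n)
    case 0 then show ?case using eq by simp
  next
    case (Suc n)
    have "th (2 * (2 ^ n * s)) c = th (2 * (2 ^ n * s)) 0"
      by (rule th_eq_prop[OF _ Suc]) (use s in simp)
    then show ?case by (simp add: mult.assoc)
  qed
  define T where "T = th s 0"
  have T1: "T \<ge> 1" unfolding T_def by (rule th0_ge1[OF s])
  obtain n :: nat where n: "real n > ln T / (s * d)" using reals_Archimedean2 by blast
  have "Suc n \<le> 2 ^ n" by (rule Suc_leI[OF less_exp])
  then have "real (Suc n) \<le> real (2 ^ n)" by (simp only: of_nat_le_iff)
  then have "real n \<le> 2 ^ n - 1" by simp
  have sd: "s * d > 0" using s d0 by simp
  have "ln T < real n * (s * d)" using n sd by (simp add: field_simps)
  also have "\<dots> \<le> (2 ^ n - 1) * (s * d)" using \<open>real n \<le> 2 ^ n - 1\<close> sd by (intro mult_right_mono) auto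
  also have "\<dots> = (2 ^ n * s - s) * d" by (simp add: algebra_simps)
  finally have lnT: "ln T < (2 ^ n * s - s) * d" .
  have "th (2 ^ n * s) c \<le> exp (- (2 ^ n * s - s) * d) * th s c"
  proof (rule th_decay[OF s _ dk])
    have "(1::real) \<le> 2 ^ n" by simp
    then show "s \<le> 2 ^ n * s" using s by simp
  qed
  also have "\<dots> = exp (- (2 ^ n * s - s) * d) * T" using eq by (simp add: T_def)
  also have "\<dots> < exp (- ln T) * T"
  proof (rule mult_strict_right_mono)
    have "- (2 ^ n * s - s) * d = - ((2 ^ n * s - s) * d)" by (simp only: mult_minus_left)
    then have "- (2 ^ n * s - s) * d < - ln T" using lnT by linarith
    then show "exp (- (2 ^ n * s - s) * d) < exp (- ln T)" by simp
  qed (use T1 in simp)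
  also have "\<dots> = 1" using T1 by (simp add: exp_minus)
  finally have "th (2 ^ n * s) 0 < 1" using eqn[of n] by simp
  moreover have "th (2 ^ n * s) 0 \<ge> 1" by (rule th0_ge1) (use s in simp)
  ultimately show False by simp
qed



definition Zs :: "(real^'n) set" where "Zs = {w. \<forall>i. w $ i \<in> \<int>}"

definition ev :: "'n \<Rightarrow> real^'n" where "ev i = (\<chi> j. if j = i then 1 else 0)"

definition Gs :: "real \<Rightarrow> real^'n^'n \<Rightarrow> real^'n \<Rightarrow> real" where
  "Gs x N w = exp (- x * (\<Sum>r\<in>UNIV. ((N *v w) $ r)\<^sup>2))"

lemma norm_sq_vec: "(norm (v :: real^'n))\<^sup>2 = (\<Sum>r\<in>UNIV. (v $ r)\<^sup>2)"
  unfolding power2_norm_eq_inner inner_vec_def by (simp add: power2_eq_square)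

lemma Gs_norm: "Gs x N w = exp (- x * (norm (N *v w))\<^sup>2)"
  by (simp add: Gs_def norm_sq_vec)

lemma mv_comp: "(N *v w) $ r = (\<Sum>j\<in>UNIV. N $ r $ j * w $ j)"
  by (simp add: matrix_vector_mult_def)

lemma mv_shift: "(N *v (w + real_of_int k *\<^sub>R ev i)) $ r = (N *v w) $ r + real_of_int k * N $ r $ i"
proof -
  have "(N *v (w + real_of_int k *\<^sub>R ev i)) $ r = (\<Sum>j\<in>UNIV. N $ r $ j * w $ j + (if j = i then real_of_int k * N $ r $ i else 0))"
    unfolding mv_comp by (intro sum.cong) (auto simp: ev_def algebra_simps)
  also have "\<dots> = (N *v w) $ r + real_of_int k * N $ r $ i"
    by (simp add: sum.distrib mv_comp)
  finally show ?thesis .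
qed

definition Z0 :: "'n \<Rightarrow> (real^'n) set" where "Z0 i = {w \<in> Zs. w $ i = 0}"

definition Phi :: "'n \<Rightarrow> (real^'n) \<times> int \<Rightarrow> real^'n" where
  "Phi i = (\<lambda>(w0, k). w0 + real_of_int k *\<^sub>R ev i)"

lemma Phi_comp: "Phi i (w0, k) $ j = w0 $ j + (if j = i then real_of_int k else 0)"
  by (simp add: Phi_def ev_def)

lemma Phi_inj: "inj_on (Phi i) (Z0 i \<times> UNIV)"
proof (rule inj_onI, clarify)
  fix w0 k w1 l assume w0: "w0 \<in> Z0 i" and w1: "w1 \<in> Z0 i" and e: "Phi i (w0, k) = Phi i (w1, l)"
  have "Phi i (w0, k) $ i = Phi i (w1, l) $ i" using e by simp
  then have kl: "k = l" using w0 w1 by (simp add: Phi_comp Z0_def)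
  have "w0 $ j = w1 $ j" for j
    using arg_cong[OF e, of "\<lambda>v. v $ j"] kl by (simp add: Phi_comp)
  then show "w0 = w1 \<and> k = l" using kl by (simp add: vec_eq_iff)
qed

lemma Phi_image: fixes i :: "'n::finite" shows "Phi i ` (Z0 i \<times> UNIV) = Zs"
proof (rule set_eqI, rule iffI)
  fix w assume "w \<in> Phi i ` (Z0 i \<times> UNIV)"
  then obtain w0 k where w: "w = Phi i (w0, k)" and w0: "w0 \<in> Z0 i" by auto
  show "w \<in> Zs" unfolding Zs_def
  proof (intro CollectI allI)
    fix j
    have "w0 $ j \<in> \<int>" using w0 by (simp add: Z0_def Zs_def)
    then show "w $ j \<in> \<int>" unfolding w Phi_comp by auto
  qed
next
  fix w :: "real^'n" assume w: "w \<in> Zs"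
  then obtain k where k: "w $ i = real_of_int k" by (auto simp: Zs_def elim!: Ints_cases)
  define w0 where "w0 = (\<chi> j. if j = i then 0 else w $ j)"
  have "w0 \<in> Z0 i" using w by (simp add: Z0_def Zs_def w0_def)
  moreover have "w = Phi i (w0, k)" by (simp add: vec_eq_iff Phi_comp w0_def k)
  ultimately show "w \<in> Phi i ` (Z0 i \<times> UNIV)" by blast
qed

lemma fubini_fwd:
  fixes f :: "real^'n \<Rightarrow> real"
  assumes nn: "\<And>w. f w \<ge> 0"
    and fib: "\<And>w0. w0 \<in> Z0 i \<Longrightarrow> ((\<lambda>k. f (Phi i (w0, k))) has_sum g w0) UNIV"
    and out: "(g has_sum S) (Z0 i)"
  shows "(f has_sum S) Zs"
proof -
  have fib': "\<And>w0. w0 \<in> Z0 i \<Longrightarrow> ((\<lambda>k. (f \<circ> Phi i) (w0, k)) has_sum g w0) UNIV"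
    using fib by simp
  have sm: "(f \<circ> Phi i) summable_on Sigma (Z0 i) (\<lambda>_. UNIV)"
    by (rule summable_on_SigmaI[OF fib']) (use out nn in \<open>auto intro: has_sum_imp_summable\<close>)
  have "((f \<circ> Phi i) has_sum S) (Z0 i \<times> UNIV)"
    using has_sum_SigmaI[OF fib' out sm] by simp
  then show ?thesis
    by (subst Phi_image[symmetric], subst has_sum_reindex[OF Phi_inj])
qed

lemma fubini_bwd:
  fixes f :: "real^'n \<Rightarrow> real"
  assumes tot: "(f has_sum S) Zs"
    and fib: "\<And>w0. w0 \<in> Z0 i \<Longrightarrow> ((\<lambda>k. f (Phi i (w0, k))) has_sum g w0) UNIV"
  shows "(g has_sum S) (Z0 i)"
proof -
  have "((f \<circ> Phi i) has_sum S) (Z0 i \<times> UNIV)"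
    using tot by (subst (asm) Phi_image[symmetric], subst (asm) has_sum_reindex[OF Phi_inj])
  then show ?thesis
    by (rule has_sum_Sigma') (use fib in simp)
qed


lemma Gs_nonneg: "Gs x N w \<ge> 0" by (simp add: Gs_def)

lemma step:
  fixes N N' :: "real^('n::finite_linorder)^('n::finite_linorder)" and i :: "'n::finite_linorder"
  assumes x: "x > 0" and ai: "N $ i $ i > 0"
    and colz: "\<And>r. r \<noteq> i \<Longrightarrow> N $ r $ i = 0"
    and N'def: "N' = (\<chi> r j. if r = i then (if j = i then N $ i $ i else 0) else N $ r $ j)"
    and tot: "(Gs x N' has_sum S') Zs"
  shows "\<exists>S. (Gs x N has_sum S) Zs \<and> S \<le> S' \<and> ((\<exists>k. k \<noteq> i \<and> N $ i $ k / N $ i $ i \<notin> \<int>) \<longrightarrow> S < S')"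
proof -
  define a where "a = N $ i $ i"
  have a0: "a > 0" using ai by (simp add: a_def)
  define Q where "Q w0 = exp (- x * (\<Sum>r\<in>UNIV - {i}. ((N *v w0) $ r)\<^sup>2))" for w0
  define yv where "yv w0 = (N *v w0) $ i" for w0
  have xa: "x * a\<^sup>2 > 0" using x a0 by simp
  have N'comp: "(N' *v v) $ r = (if r = i then a * v $ i else (N *v v) $ r)" for v r
  proof (cases "r = i")
    case True
    have "(N' *v v) $ r = (\<Sum>j\<in>UNIV. if j = i then a * v $ i else 0)"
      unfolding mv_comp N'def using True by (intro sum.cong) (auto simp: a_def)
    then show ?thesis using True by simp
  next
    case False
    then show ?thesis unfolding mv_comp N'def by simp
  qed
  have N'col: "N' $ r $ i = 0" if "r \<noteq> i" for r using that colz by (simp add: N'def)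
  have Phii: "Phi i (w0, k) = w0 + real_of_int k *\<^sub>R ev i" for w0 k by (simp add: Phi_def)
  have sumsplit: "(\<Sum>r\<in>UNIV. f r) = f i + (\<Sum>r\<in>UNIV - {i}. f r)" for f :: "_ \<Rightarrow> real"
    by (rule sum.remove) auto
  have e1: "Gs x N (Phi i (w0, k)) = Q w0 * exp (- (x * a\<^sup>2) * (real_of_int k + yv w0 / a)\<^sup>2)" for w0 k
  proof -
    have r: "(\<Sum>r\<in>UNIV - {i}. ((N *v Phi i (w0, k)) $ r)\<^sup>2) = (\<Sum>r\<in>UNIV - {i}. ((N *v w0) $ r)\<^sup>2)"
      by (intro sum.cong) (auto simp: Phii mv_shift colz)
    have ii: "(N *v Phi i (w0, k)) $ i = yv w0 + real_of_int k * a"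
      unfolding yv_def a_def by (simp add: Phii mv_shift)
    have sq: "x * (yv w0 + real_of_int k * a)\<^sup>2 = (x * a\<^sup>2) * (real_of_int k + yv w0 / a)\<^sup>2"
      using a0 by (simp add: power2_eq_square field_simps)
    have "Gs x N (Phi i (w0, k)) = exp (- x * (\<Sum>r\<in>UNIV - {i}. ((N *v w0) $ r)\<^sup>2) + - (x * (yv w0 + real_of_int k * a)\<^sup>2))"
      unfolding Gs_def by (subst sumsplit) (simp add: r ii algebra_simps)
    also have "\<dots> = Q w0 * exp (- (x * a\<^sup>2) * (real_of_int k + yv w0 / a)\<^sup>2)"
      unfolding Q_def exp_add sq by simp
    finally show ?thesis .
  qed
  have e2: "Gs x N' (Phi i (w0, k)) = Q w0 * exp (- (x * a\<^sup>2) * (real_of_int k + 0)\<^sup>2)" if w0: "w0 \<in> Z0 i" for w0 k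
  proof -
    have r: "(\<Sum>r\<in>UNIV - {i}. ((N' *v Phi i (w0, k)) $ r)\<^sup>2) = (\<Sum>r\<in>UNIV - {i}. ((N *v w0) $ r)\<^sup>2)"
      by (intro sum.cong) (auto simp: N'comp Phii mv_shift colz N'col)
    have ii: "(N' *v Phi i (w0, k)) $ i = real_of_int k * a"
      using w0 by (simp add: N'comp Phi_comp Z0_def)
    have sq: "x * (real_of_int k * a)\<^sup>2 = (x * a\<^sup>2) * (real_of_int k + 0)\<^sup>2"
      by (simp add: power2_eq_square field_simps)
    have "Gs x N' (Phi i (w0, k)) = exp (- x * (\<Sum>r\<in>UNIV - {i}. ((N *v w0) $ r)\<^sup>2) + - (x * (real_of_int k * a)\<^sup>2))"
      unfolding Gs_def by (subst sumsplit) (simp add: r ii algebra_simps)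
    also have "\<dots> = Q w0 * exp (- (x * a\<^sup>2) * (real_of_int k + 0)\<^sup>2)"
      unfolding Q_def exp_add sq by simp
    finally show ?thesis .
  qed
  define g' where "g' w0 = Q w0 * th (x * a\<^sup>2) 0" for w0
  define g where "g w0 = Q w0 * th (x * a\<^sup>2) (yv w0 / a)" for w0
  have fib': "((\<lambda>k. Gs x N' (Phi i (w0, k))) has_sum g' w0) UNIV" if "w0 \<in> Z0 i" for w0
    unfolding e2[OF that] g'_def by (rule has_sum_cmult_right[OF th_has_sum[OF xa]])
  have fib: "((\<lambda>k. Gs x N (Phi i (w0, k))) has_sum g w0) UNIV" for w0
    unfolding e1 g_def by (rule has_sum_cmult_right[OF th_has_sum[OF xa]])
  have out': "(g' has_sum S') (Z0 i)" by (rule fubini_bwd[OF tot fib'])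
  have Q0: "Q w0 > 0" for w0 by (simp add: Q_def)
  have gle: "g w0 \<le> g' w0" for w0
    unfolding g_def g'_def using Q0[of w0] th_max[OF xa] by (intro mult_left_mono) auto
  have g0: "g w0 \<ge> 0" for w0
    unfolding g_def using Q0[of w0] th_pos[OF xa] by (intro mult_nonneg_nonneg) (auto intro: less_imp_le)
  have gsum: "g summable_on (Z0 i)"
    by (rule summable_on_comparison_test[OF has_sum_imp_summable[OF out']]) (use gle g0 in auto)
  define S where "S = infsum g (Z0 i)"
  have out: "(g has_sum S) (Z0 i)" using gsum by (simp add: S_def)
  have tot2: "(Gs x N has_sum S) Zs"
    by (rule fubini_fwd[OF Gs_nonneg fib out])
  have le: "S \<le> S'" by (rule has_sum_mono[OF out out' gle])
  have strict: "S < S'" if wit: "\<exists>k. k \<noteq> i \<and> N $ i $ k / N $ i $ i \<notin> \<int>"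
  proof -
    obtain k where k: "k \<noteq> i" "N $ i $ k / a \<notin> \<int>" using wit by (auto simp: a_def)
    have evk: "ev k \<in> Z0 i" using k by (auto simp: Z0_def Zs_def ev_def)
    have yk: "yv (ev k) = N $ i $ k"
    proof -
      have "yv (ev k) = (\<Sum>j\<in>UNIV. if j = k then N $ i $ k else 0)"
        unfolding yv_def mv_comp by (intro sum.cong) (auto simp: ev_def)
      then show ?thesis by simp
    qed
    have "g (ev k) < g' (ev k)"
      unfolding g_def g'_def yk using Q0[of "ev k"] th_strict[OF xa k(2)] by simp
    then show ?thesis by (rule has_sum_strict_mono[OF out out' gle evk])
  qed
  show ?thesis using tot2 le strict by blast
qed



definition vint :: "('n::finite \<Rightarrow> int) \<Rightarrow> real^'n" where "vint g = (\<chi> i. real_of_int (g i))"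

lemma vint_inj: "inj vint"
  by (rule injI) (simp add: vint_def vec_eq_iff fun_eq_iff)

lemma vint_range: "range vint = Zs"
proof (rule set_eqI, rule iffI)
  fix w :: "real^'n" assume "w \<in> range vint" then show "w \<in> Zs" by (auto simp: vint_def Zs_def)
next
  fix w :: "real^'n" assume w: "w \<in> Zs"
  have "\<forall>i. \<exists>k. w $ i = real_of_int k" using w by (auto simp: Zs_def elim!: Ints_cases)
  then obtain g where "\<forall>i. w $ i = real_of_int (g i)" by metis
  then have "w = vint g" by (simp add: vint_def vec_eq_iff)
  then show "w \<in> range vint" by blast
qed

lemma diag_mv: "(diag_mat a *v v) $ r = a $ r * v $ r"
proof -
  have "(diag_mat a *v v) $ r = (\<Sum>j\<in>UNIV. if j = r then a $ r * v $ r else 0)"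
    unfolding mv_comp diag_mat_def by (intro sum.cong) auto
  then show ?thesis by simp
qed

lemma base:
  fixes a :: "real^'n::finite"
  assumes x: "x > 0" and apos: "\<forall>i. a $ i > 0"
  shows "(Gs x (diag_mat a) has_sum (\<Prod>i\<in>UNIV. th (x * (a $ i)\<^sup>2) 0)) Zs"
proof -
  define f where "f i k = exp (- (x * (a $ i)\<^sup>2) * (real_of_int k + 0)\<^sup>2)" for i k
  have xa: "x * (a $ i)\<^sup>2 > 0" for i using x apos[rule_format, of i] by (intro mult_pos_pos) auto
  have G: "Gs x (diag_mat a) (vint g) = (\<Prod>i\<in>UNIV. f i (g i))" for g
  proof -
    have "Gs x (diag_mat a) (vint g) = exp (\<Sum>i\<in>UNIV. - (x * (a $ i)\<^sup>2) * (real_of_int (g i) + 0)\<^sup>2)"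
      unfolding Gs_def diag_mv by (simp add: vint_def sum_distrib_left power_mult_distrib algebra_simps)
    also have "\<dots> = (\<Prod>i\<in>UNIV. f i (g i))" by (simp add: exp_sum f_def)
    finally show ?thesis .
  qed
  have abs: "(\<lambda>k. norm (f i k)) summable_on UNIV" for i
    using th_summable[OF xa[of i], of 0] by (simp add: f_def)
  have inf: "infsum (\<lambda>g. \<Prod>i\<in>UNIV. f i (g i)) (PiE UNIV (\<lambda>_. UNIV)) = (\<Prod>i\<in>UNIV. infsum (f i) UNIV)"
    by (rule infsum_prod_PiE_abs) (use abs in auto)
  have thi: "infsum (f i) UNIV = th (x * (a $ i)\<^sup>2) 0" for i unfolding th_def by (rule infsum_cong) (simp add: f_def)
  have P0: "(\<Prod>i\<in>UNIV. th (x * (a $ i)\<^sup>2) 0) > 0" using th_pos[OF xa] by (intro prod_pos) auto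
  have inf2: "infsum (\<lambda>g. \<Prod>i\<in>UNIV. f i (g i)) UNIV = (\<Prod>i\<in>UNIV. th (x * (a $ i)\<^sup>2) 0)"
    using inf thi by simp
  have sm: "(\<lambda>g. \<Prod>i\<in>UNIV. f i (g i)) summable_on UNIV"
  proof (rule ccontr)
    assume "\<not> (\<lambda>g. \<Prod>i\<in>UNIV. f i (g i)) summable_on UNIV"
    then have "infsum (\<lambda>g. \<Prod>i\<in>UNIV. f i (g i)) UNIV = 0" by (rule infsum_not_exists)
    then show False using inf2 P0 by linarith
  qed
  have "((\<lambda>g. \<Prod>i\<in>UNIV. f i (g i)) has_sum (\<Prod>i\<in>UNIV. th (x * (a $ i)\<^sup>2) 0)) UNIV"
    using has_sum_infsum[OF sm] inf2 by simp
  then have "((Gs x (diag_mat a) \<circ> vint) has_sum (\<Prod>i\<in>UNIV. th (x * (a $ i)\<^sup>2) 0)) UNIV"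
    by (simp add: o_def G)
  then have "(Gs x (diag_mat a) has_sum (\<Prod>i\<in>UNIV. th (x * (a $ i)\<^sup>2) 0)) (range vint)"
    by (subst has_sum_reindex[OF vint_inj])
  then show ?thesis by (simp add: vint_range)
qed



lemma card_gt_less:
  fixes j k :: "'n::finite_linorder"
  assumes "j < k" shows "card {l. k < l} < card {l. j < l}"
proof (rule psubset_card_mono)
  show "{l. k < l} \<subset> {l. j < l}" using assms by auto
qed simp

lemma card_lt_less:
  fixes j k :: "'n::finite_linorder"
  assumes "k < j" shows "card {l. l < k} < card {l. l < j}"
proof (rule psubset_card_mono)
  show "{l. l < k} \<subset> {l. l < j}" using assms by auto
qed simp

lemma tri_inj:
  fixes N :: "real^('n::finite_linorder)^('n::finite_linorder)"
  assumes up: "\<forall>i j. j < i \<longrightarrow> N $ i $ j = 0" and dg: "\<forall>i. N $ i $ i \<noteq> 0"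
  shows "inj (\<lambda>w. N *v w)"
proof (rule injI)
  fix u v assume e: "N *v u = N *v v"
  define d where "d = u - v"
  have Nd: "N *v d = 0" by (simp add: d_def matrix_vector_mult_diff_distrib e)
  have main: "\<forall>j. card {k. j < k} = n \<longrightarrow> d $ j = 0" for n
  proof (induction n rule: less_induct)
    case (less n)
    show ?case
    proof (intro allI impI)
      fix j :: "'n::finite_linorder" assume cj: "card {k. j < k} = n"
      have dk: "d $ k = 0" if "j < k" for k
        using less card_gt_less[OF that] cj by auto
      have t: "N $ j $ k * d $ k = (if k = j then N $ j $ j * d $ j else 0)" for k
      proof (cases k j rule: linorder_cases)
        case less then show ?thesis using up by auto
      next
        case greater then show ?thesis using dk by auto
      qed simp
      have "0 = (N *v d) $ j" using Nd by simp
      also have "\<dots> = (\<Sum>k\<in>UNIV. if k = j then N $ j $ j * d $ j else 0)"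
        unfolding mv_comp by (rule sum.cong[OF refl t])
      also have "\<dots> = N $ j $ j * d $ j" by simp
      finally show "d $ j = 0" using dg by simp
    qed
  qed
  have "d = 0" unfolding vec_eq_iff using main by auto
  then show "u = v" by (simp add: d_def)
qed

lemma lattice_image: "lattice_gen N = (\<lambda>w. N *v w) ` Zs"
  by (auto simp: lattice_gen_def Zs_def)

lemma lattice_sum:
  assumes "inj (\<lambda>w. N *v w)"
  shows "(\<Sum>\<^sub>\<infinity>t\<in>lattice_gen N. exp (- x * (norm t)\<^sup>2)) = infsum (Gs x N) Zs"
proof -
  have "(\<Sum>\<^sub>\<infinity>t\<in>lattice_gen N. exp (- x * (norm t)\<^sup>2)) = infsum ((\<lambda>t. exp (- x * (norm t)\<^sup>2)) \<circ> (\<lambda>w. N *v w)) Zs"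
    unfolding lattice_image by (rule infsum_reindex) (use assms in \<open>auto intro: inj_on_subset\<close>)
  also have "\<dots> = infsum (Gs x N) Zs"
  proof -
    have "Gs x N = (\<lambda>w. exp (- x * (norm (N *v w))\<^sup>2))" by (rule ext) (rule Gs_norm)
    then show ?thesis by (simp only: o_def)
  qed
  finally show ?thesis .
qed

lemma vec_decomp: "p = (\<Sum>r\<in>UNIV. (p $ r) *\<^sub>R ev r)"
proof -
  have "(\<Sum>r\<in>UNIV. (p $ r) *\<^sub>R ev r) $ j = p $ j" for j
  proof -
    have "(\<Sum>r\<in>UNIV. (p $ r) *\<^sub>R ev r) $ j = (\<Sum>r\<in>UNIV. if r = j then p $ j else 0)"
      unfolding sum_component by (intro sum.cong) (auto simp: ev_def)
    then show ?thesis by simp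
  qed
  then show ?thesis by (simp add: vec_eq_iff)
qed



lemma lattice_eq:
  fixes M :: "real^('n::finite_linorder)^('n::finite_linorder)" and a :: "real^('n::finite_linorder)"
  assumes apos: "\<forall>i. a $ i > 0"
    and upper: "\<forall>i j. j < i \<longrightarrow> M $ i $ j = 0"
    and diag: "\<forall>i. M $ i $ i = a $ i"
    and intr: "\<forall>i k. i < k \<longrightarrow> M $ i $ k / a $ i \<in> \<int>"
  shows "lattice_gen M = lattice_gen (diag_mat a)"
proof
  have ratio: "M $ i $ k / a $ i \<in> \<int>" for i k
  proof (cases k i rule: linorder_cases)
    case less then show ?thesis using upper by auto
  next
    case equal then show ?thesis using diag apos by (metis Ints_1 less_irrefl divide_self)
  next
    case greater then show ?thesis using intr by auto
  qed
  show "lattice_gen M \<subseteq> lattice_gen (diag_mat a)"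
  proof
    fix t assume "t \<in> lattice_gen M"
    then obtain w where t: "t = M *v w" and w: "w \<in> Zs" by (auto simp: lattice_image)
    define v where "v = (\<chi> i. \<Sum>k\<in>UNIV. (M $ i $ k / a $ i) * w $ k)"
    have "v \<in> Zs"
    proof -
      have "(\<Sum>k\<in>UNIV. (M $ i $ k / a $ i) * w $ k) \<in> \<int>" for i
      proof (rule Ints_sum)
        fix k show "(M $ i $ k / a $ i) * w $ k \<in> \<int>"
          by (rule Ints_mult[OF ratio]) (use w in \<open>simp add: Zs_def\<close>)
      qed
      then show ?thesis by (simp add: Zs_def v_def)
    qed
    moreover have "diag_mat a *v v = M *v w"
    proof -
      have "(diag_mat a *v v) $ r = (M *v w) $ r" for r
      proof -
        have "(diag_mat a *v v) $ r = a $ r * v $ r" by (rule diag_mv)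
        also have "\<dots> = a $ r * (\<Sum>k\<in>UNIV. (M $ r $ k / a $ r) * w $ k)" by (simp add: v_def)
        also have "\<dots> = (\<Sum>k\<in>UNIV. M $ r $ k * w $ k)"
          unfolding sum_distrib_left using apos[rule_format, of r] by (intro sum.cong) auto
        also have "\<dots> = (M *v w) $ r" by (simp add: mv_comp)
        finally show ?thesis .
      qed
      then show ?thesis by (simp add: vec_eq_iff)
    qed
    ultimately show "t \<in> lattice_gen (diag_mat a)" unfolding t lattice_image by (metis image_eqI)
  qed
  define L where "L = lattice_gen M"
  have L0: "M *v w \<in> L" if "w \<in> Zs" for w using that by (simp add: L_def lattice_image)
  have Ladd: "p + q \<in> L" if hpq: "p \<in> L" "q \<in> L" for p q
  proof -
    obtain u v where "p = M *v u" "q = M *v v" "u \<in> Zs" "v \<in> Zs" using hpq by (auto simp: L_def lattice_image)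
    moreover have "u + v \<in> Zs" using \<open>u \<in> Zs\<close> \<open>v \<in> Zs\<close> by (auto simp: Zs_def)
    ultimately show ?thesis using L0 by (metis matrix_vector_right_distrib)
  qed
  have Lsmul: "c *\<^sub>R p \<in> L" if hpc: "p \<in> L" "c \<in> \<int>" for p c
  proof -
    obtain u where "p = M *v u" "u \<in> Zs" using hpc by (auto simp: L_def lattice_image)
    moreover have "c *\<^sub>R u \<in> Zs" using \<open>u \<in> Zs\<close> \<open>c \<in> \<int>\<close> by (auto simp: Zs_def)
    ultimately show ?thesis using L0 by (metis matrix_vector_mult_scaleR)
  qed
  have Lzero: "0 \<in> L" using L0[of 0] by (simp add: Zs_def)
  have Lsum: "finite S \<Longrightarrow> (\<forall>r\<in>S. f r \<in> L) \<Longrightarrow> sum f S \<in> L" for S f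
    by (induction S rule: finite_induct) (auto intro: Lzero Ladd)
  have Ldiff: "p - q \<in> L" if "p \<in> L" "q \<in> L" for p q
    using Ladd[OF that(1) Lsmul[OF that(2), of "-1"]] by simp
  have evZ: "ev j \<in> Zs" for j by (auto simp: Zs_def ev_def)
  have E: "\<forall>j. card {l. l < j} = n \<longrightarrow> a $ j *\<^sub>R ev j \<in> L" for n
  proof (induction n rule: less_induct)
    case (less n)
    show ?case
    proof (intro allI impI)
      fix j :: "'n::finite_linorder" assume cj: "card {l. l < j} = n"
      have IH: "a $ r *\<^sub>R ev r \<in> L" if "r < j" for r
        using less card_lt_less[OF that] cj by auto
      have comp: "(M *v ev j) $ r = M $ r $ j" for r
      proof -
        have "(M *v ev j) $ r = (\<Sum>k\<in>UNIV. if k = j then M $ r $ j else 0)"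
          unfolding mv_comp by (intro sum.cong) (auto simp: ev_def)
        then show ?thesis by simp
      qed
      have trm: "(M $ r $ j) *\<^sub>R ev r = (if r = j then a $ j *\<^sub>R ev j else 0)
          + (if r < j then (M $ r $ j / a $ r) *\<^sub>R (a $ r *\<^sub>R ev r) else 0)" for r
      proof (cases r j rule: linorder_cases)
        case less then show ?thesis using apos[rule_format, of r] by simp
      next
        case equal then show ?thesis using diag by simp
      next
        case greater then show ?thesis using upper by (auto dest: less_not_sym)
      qed
      have "M *v ev j = (\<Sum>r\<in>UNIV. (M $ r $ j) *\<^sub>R ev r)"
        using vec_decomp[of "M *v ev j"] by (simp add: comp)
      also have "\<dots> = a $ j *\<^sub>R ev j + (\<Sum>r\<in>UNIV. if r < j then (M $ r $ j / a $ r) *\<^sub>R (a $ r *\<^sub>R ev r) else 0)"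
        unfolding trm sum.distrib by simp
      finally have "a $ j *\<^sub>R ev j = M *v ev j - (\<Sum>r\<in>UNIV. if r < j then (M $ r $ j / a $ r) *\<^sub>R (a $ r *\<^sub>R ev r) else 0)"
        by simp
      also have "\<dots> \<in> L"
      proof (rule Ldiff[OF L0[OF evZ]], rule Lsum)
        show "\<forall>r\<in>UNIV. (if r < j then (M $ r $ j / a $ r) *\<^sub>R (a $ r *\<^sub>R ev r) else 0) \<in> L"
        proof
          fix r :: "'n::finite_linorder" assume "r \<in> UNIV"
          show "(if r < j then (M $ r $ j / a $ r) *\<^sub>R (a $ r *\<^sub>R ev r) else 0) \<in> L"
          proof (cases "r < j")
            case True
            show ?thesis unfolding if_P[OF True] by (rule Lsmul[OF IH[OF True] ratio])
          next
            case False
            show ?thesis unfolding if_not_P[OF False] by (rule Lzero)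
          qed
        qed
      qed simp
      finally show "a $ j *\<^sub>R ev j \<in> L" .
    qed
  qed
  have Ej: "a $ j *\<^sub>R ev j \<in> L" for j using E by blast
  show "lattice_gen (diag_mat a) \<subseteq> lattice_gen M"
  proof
    fix t assume "t \<in> lattice_gen (diag_mat a)"
    then obtain v where t: "t = diag_mat a *v v" and v: "v \<in> Zs" by (auto simp: lattice_image)
    have "t = (\<Sum>r\<in>UNIV. (t $ r) *\<^sub>R ev r)" by (rule vec_decomp)
    also have "\<dots> = (\<Sum>r\<in>UNIV. (v $ r) *\<^sub>R (a $ r *\<^sub>R ev r))"
      unfolding t diag_mv by (simp add: mult.commute)
    also have "\<dots> \<in> L"
    proof (rule Lsum)
      show "\<forall>r\<in>UNIV. (v $ r) *\<^sub>R (a $ r *\<^sub>R ev r) \<in> L"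
      proof
        fix r :: "'n::finite_linorder" assume "r \<in> UNIV"
        have "v $ r \<in> \<int>" using v by (simp add: Zs_def)
        then show "(v $ r) *\<^sub>R (a $ r *\<^sub>R ev r) \<in> L" by (rule Lsmul[OF Ej])
      qed
    qed simp
    finally show "t \<in> lattice_gen M" by (simp add: L_def)
  qed
qed



definition NR :: "real^'n^'n \<Rightarrow> real^'n \<Rightarrow> 'n::finite set \<Rightarrow> real^'n^'n" where
  "NR M a R = (\<chi> r j. if r \<in> R then (if j = r then a $ r else 0) else M $ r $ j)"

lemma chain:
  fixes M :: "real^('n::finite_linorder)^('n::finite_linorder)" and a :: "real^('n::finite_linorder)"
  assumes apos: "\<forall>i. a $ i > 0"
    and upper: "\<forall>i j. j < i \<longrightarrow> M $ i $ j = 0"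
    and diag: "\<forall>i. M $ i $ i = a $ i"
    and x: "x > 0"
    and SD: "(Gs x (diag_mat a) has_sum SD) Zs"
    and wit: "k0 \<noteq> i0" "M $ i0 $ k0 / a $ i0 \<notin> \<int>"
  shows "card (UNIV - R) = n \<Longrightarrow> (\<forall>r s. s \<in> R \<longrightarrow> r < s \<longrightarrow> r \<in> R) \<Longrightarrow>
    \<exists>S. (Gs x (NR M a R) has_sum S) Zs \<and> S \<le> SD \<and> (i0 \<notin> R \<longrightarrow> S < SD)"
proof (induction n arbitrary: R)
  case 0
  then have "R = UNIV" by auto
  moreover have "NR M a UNIV = diag_mat a" by (simp add: NR_def diag_mat_def vec_eq_iff eq_commute)
  ultimately show ?case using SD by auto
next
  case (Suc n)
  have ne: "UNIV - R \<noteq> {}"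
  proof
    assume h: "UNIV - R = {}"
    have "card (UNIV - R) = 0" by (simp only: h card.empty)
    then show False using Suc.prems(1) by simp
  qed
  define i where "i = Min (UNIV - R)"
  have iR: "i \<notin> R" unfolding i_def using Min_in[OF _ ne] by auto
  have Rlt: "r \<in> R \<longleftrightarrow> r < i" for r
  proof
    assume "r \<in> R"
    show "r < i"
    proof (rule ccontr)
      assume "\<not> r < i"
      then have "i < r" using iR \<open>r \<in> R\<close> by (metis linorder_neqE)
      then show False using Suc.prems(2) \<open>r \<in> R\<close> iR by blast
    qed
  next
    assume "r < i"
    show "r \<in> R"
    proof (rule ccontr)
      assume "r \<notin> R"
      then have "i \<le> r" unfolding i_def by (intro Min_le) auto
      then show False using \<open>r < i\<close> by simp
    qed
  qed
  define R' where "R' = insert i R"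
  have cR': "card (UNIV - R') = n"
  proof -
    have "UNIV - R' = (UNIV - R) - {i}" by (auto simp: R'_def)
    then show ?thesis using Suc.prems(1) iR by (simp add: card_Diff_singleton)
  qed
  have dR': "\<forall>r s. s \<in> R' \<longrightarrow> r < s \<longrightarrow> r \<in> R'"
    unfolding R'_def using Rlt by (auto dest: less_trans)
  obtain S' where S': "(Gs x (NR M a R') has_sum S') Zs" "S' \<le> SD" "i0 \<notin> R' \<longrightarrow> S' < SD"
    using Suc.IH[OF cR' dR'] by blast
  define N where "N = NR M a R"
  have Nii: "N $ i $ i = a $ i" using iR diag by (simp add: N_def NR_def)
  have ai: "N $ i $ i > 0" using Nii apos by simp
  have colz: "N $ r $ i = 0" if "r \<noteq> i" for r
  proof (cases "r \<in> R")
    case True then show ?thesis using that by (simp add: N_def NR_def)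
  next
    case False
    then have "i < r" using Rlt[of r] that by (metis linorder_neqE)
    then show ?thesis using False upper by (simp add: N_def NR_def)
  qed
  have N'def: "NR M a R' = (\<chi> r j. if r = i then (if j = i then N $ i $ i else 0) else N $ r $ j)"
    unfolding vec_eq_iff using iR diag by (auto simp: N_def NR_def R'_def)
  obtain S where S: "(Gs x N has_sum S) Zs" "S \<le> S'"
    "(\<exists>k. k \<noteq> i \<and> N $ i $ k / N $ i $ i \<notin> \<int>) \<longrightarrow> S < S'"
    using step[OF x ai colz N'def S'(1)] by blast
  have "i0 \<notin> R \<longrightarrow> S < SD"
  proof
    assume i0R: "i0 \<notin> R"
    show "S < SD"
    proof (cases "i0 = i")
      case True
      have "N $ i $ k0 / N $ i $ i \<notin> \<int>" using wit True iR by (simp add: N_def NR_def diag)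
      then have "S < S'" using S(3) wit True by blast
      then show ?thesis using S'(2) by simp
    next
      case False
      then have "i0 \<notin> R'" using i0R by (simp add: R'_def)
      then show ?thesis using S'(3) S(2) by simp
    qed
  qed
  then show ?case using S S'(2) unfolding N_def by auto
qed

theorem theorem2:
  fixes M :: "real^('n::finite_linorder)^('n::finite_linorder)" and a :: "real^('n::finite_linorder)" and x :: real
  assumes apos: "\<forall>i. a $ i > 0"
    and upper: "\<forall>i j. j < i \<longrightarrow> M $ i $ j = 0"
    and diag: "\<forall>i. M $ i $ i = a $ i"
    and skew: "lattice_gen M \<noteq> lattice_gen (diag_mat a)"
    and xpos: "x > 0"
  shows "(\<Sum>\<^sub>\<infinity>t\<in>lattice_gen M. exp (- x * (norm t)\<^sup>2))
         < (\<Sum>\<^sub>\<infinity>t\<in>lattice_gen (diag_mat a). exp (- x * (norm t)\<^sup>2))"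
proof -
  obtain i0 k0 where wit: "i0 < k0" "M $ i0 $ k0 / a $ i0 \<notin> \<int>"
    using lattice_eq[OF apos upper diag] skew by blast
  have dM: "\<forall>i. M $ i $ i \<noteq> 0" using diag apos by (metis less_irrefl)
  have injM: "inj (\<lambda>w. M *v w)" by (rule tri_inj[OF upper dM])
  have dD: "\<forall>i. diag_mat a $ i $ i \<noteq> 0"
  proof
    fix i show "diag_mat a $ i $ i \<noteq> 0" using apos[rule_format, of i] by (simp add: diag_mat_def)
  qed
  have uD: "\<forall>i j. j < i \<longrightarrow> diag_mat a $ i $ j = 0" by (simp add: diag_mat_def)
  have injD: "inj (\<lambda>w. diag_mat a *v w)" by (rule tri_inj[OF uD dD])
  define SD where "SD = (\<Prod>i\<in>UNIV. th (x * (a $ i)\<^sup>2) 0)"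
  have SD: "(Gs x (diag_mat a) has_sum SD) Zs" unfolding SD_def by (rule base[OF xpos apos])
  have "\<exists>S. (Gs x (NR M a {}) has_sum S) Zs \<and> S \<le> SD \<and> (i0 \<notin> {} \<longrightarrow> S < SD)"
    by (rule chain[OF apos upper diag xpos SD _ wit(2)]) (use wit in auto)
  moreover have "NR M a {} = M" by (simp add: NR_def vec_eq_iff)
  ultimately obtain S where S: "(Gs x M has_sum S) Zs" "S < SD" by auto
  have "(\<Sum>\<^sub>\<infinity>t\<in>lattice_gen M. exp (- x * (norm t)\<^sup>2)) = S"
    using lattice_sum[OF injM] S(1) infsumI by metis
  moreover have "(\<Sum>\<^sub>\<infinity>t\<in>lattice_gen (diag_mat a). exp (- x * (norm t)\<^sup>2)) = SD"
    using lattice_sum[OF injD] SD infsumI by metis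
  ultimately show ?thesis using S(2) by simp
qed


end
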